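(* Let $\lambda\supseteq\mu$ be partitions and $j\in\mathbb Z$, and suppose $\mu$ has an addable node in column $j$. If there exists a cover-expansive Dyck tiling of $\lambda\setminus\mu$, then $\lambda$ has either an addable node or a removable node in column $j$.
   Context: Partitions are identified with Young diagrams $\{(a,b)\in\mathbb N^2:b\le\lambda_a\}$; nodes are elements of $\mathbb N^2$; $(a,b)$ has height $a+b$ and lies in column $b-a$ (smaller column = further left). An addable node of $\lambda$ is a node not in $\lambda$ whose addition gives a partition; a removable node is a node of $\lambda$ whose removal gives a partition. $\mathtt{NE}(\mathfrak n)=\mathfrak n+(0,1)$, $\mathtt{SW}(\mathfrak n)=\mathfrak n-(0,1)$, $\mathtt{SE}(\mathfrak n)=\mathfrak n-(1,0)$. A tile is a finite nonempty set of nodes orderable $\mathfrak n_1,\dots,\mathfrak n_r$ with $\mathfrak n_{i+1}\in\{\mathtt{NE}(\mathfrak n_i),\mathtt{SE}(\mathfrak n_i)\}$; start = leftmost node, end = rightmost node; Dyck tile if start and end both attain the maximal height of its nodes. A Dyck tiling of $\lambda\setminus\mu$ is a partition of it into Dyck tiles. It is cover-expansive if whenever $\mathfrak a,\mathtt{SE}(\mathfrak a)\in\lambda\setminus\mu$, the tile of $\mathtt{SE}(\mathfrak a)$ starts weakly left of the start of the tile of $\mathfrak a$, and whenever $\mathfrak a,\mathtt{SW}(\mathfrak a)\in\lambda\setminus\mu$, the tile of $\mathtt{SW}(\mathfrak a)$ ends weakly right of the end of the tile of $\mathfrak a$. *)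

theory Defs
  imports Main
begin

text \<open>Nodes are pairs (a,b) of integers; a genuine node of N^2 has a >= 1 and b >= 1.
  Partitions are identified with their Young diagrams.\<close>

type_synonym node = "int \<times> int"

definition is_node :: "node \<Rightarrow> bool" where
  "is_node n \<longleftrightarrow> fst n \<ge> 1 \<and> snd n \<ge> 1"

text \<open>A Young diagram: a finite set of nodes of the form {(a,b). b <= lambda_a}
  with lambda weakly decreasing, i.e. a finite down-closed set of nodes.\<close>
definition young_diagram :: "node set \<Rightarrow> bool" where
  "young_diagram L \<longleftrightarrow> finite L \<and> (\<forall>n\<in>L. is_node n) \<and>
     (\<forall>a b a' b'. (a, b) \<in> L \<and> 1 \<le> a' \<and> a' \<le> a \<and> 1 \<le> b' \<and> b' \<le> b \<longrightarrow> (a', b') \<in> L)"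

definition height :: "node \<Rightarrow> int" where
  "height n = fst n + snd n"

definition col :: "node \<Rightarrow> int" where
  "col n = snd n - fst n"

definition addable :: "node set \<Rightarrow> node \<Rightarrow> bool" where
  "addable L n \<longleftrightarrow> is_node n \<and> n \<notin> L \<and> young_diagram (insert n L)"

definition removable :: "node set \<Rightarrow> node \<Rightarrow> bool" where
  "removable L n \<longleftrightarrow> n \<in> L \<and> young_diagram (L - {n})"

definition NE :: "node \<Rightarrow> node" where "NE n = (fst n, snd n + 1)"
definition SW :: "node \<Rightarrow> node" where "SW n = (fst n, snd n - 1)"
definition SE :: "node \<Rightarrow> node" where "SE n = (fst n - 1, snd n)"

definition is_tile :: "node set \<Rightarrow> bool" where
  "is_tile T \<longleftrightarrow> finite T \<and> T \<noteq> {} \<and> (\<forall>n\<in>T. is_node n) \<and>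
     (\<exists>ns. set ns = T \<and> distinct ns \<and>
        (\<forall>i. i + 1 < length ns \<longrightarrow> ns ! (i + 1) \<in> {NE (ns ! i), SE (ns ! i)}))"

definition tile_start :: "node set \<Rightarrow> node" where
  "tile_start T = (THE n. n \<in> T \<and> (\<forall>m\<in>T. col n \<le> col m))"

definition tile_end :: "node set \<Rightarrow> node" where
  "tile_end T = (THE n. n \<in> T \<and> (\<forall>m\<in>T. col m \<le> col n))"

definition dyck_tile :: "node set \<Rightarrow> bool" where
  "dyck_tile T \<longleftrightarrow> is_tile T \<and>
     height (tile_start T) = Max (height ` T) \<and> height (tile_end T) = Max (height ` T)"

definition dyck_tiling :: "node set \<Rightarrow> node set \<Rightarrow> node set set \<Rightarrow> bool" where
  "dyck_tiling L M P \<longleftrightarrow> (\<forall>T\<in>P. dyck_tile T) \<and>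
     (\<forall>T\<in>P. \<forall>T'\<in>P. T \<noteq> T' \<longrightarrow> T \<inter> T' = {}) \<and> \<Union>P = L - M"

definition tile_of :: "node set set \<Rightarrow> node \<Rightarrow> node set" where
  "tile_of P n = (THE T. T \<in> P \<and> n \<in> T)"

definition cover_expansive :: "node set \<Rightarrow> node set \<Rightarrow> node set set \<Rightarrow> bool" where
  "cover_expansive L M P \<longleftrightarrow>
     (\<forall>a. a \<in> L - M \<and> SE a \<in> L - M \<longrightarrow>
        col (tile_start (tile_of P (SE a))) \<le> col (tile_start (tile_of P a))) \<and>
     (\<forall>a. a \<in> L - M \<and> SW a \<in> L - M \<longrightarrow>
        col (tile_end (tile_of P (SW a))) \<ge> col (tile_end (tile_of P a)))"

end

theory Submission
  imports Defs
begin

lemma col_NE[simp]: "col (NE x) = col x + 1" by (simp add: col_def NE_def)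
lemma col_SE[simp]: "col (SE x) = col x + 1" by (simp add: col_def SE_def)

lemma tile_list:
  assumes "is_tile T"
  obtains ns where "set ns = T" "ns \<noteq> []" "\<And>i. i < length ns \<Longrightarrow> col (ns!i) = col (ns!0) + int i"
    "\<And>i. i+1 < length ns \<Longrightarrow> ns!(i+1) = NE (ns!i) \<or> ns!(i+1) = SE (ns!i)"
proof -
  have "\<exists>ns. set ns = T \<and> (\<forall>i. i + 1 < length ns \<longrightarrow> ns ! (i + 1) \<in> {NE (ns ! i), SE (ns ! i)}) \<and> T \<noteq> {}"
    using assms unfolding is_tile_def by metis
  then obtain ns where ns: "set ns = T" "\<forall>i. i + 1 < length ns \<longrightarrow> ns ! (i + 1) \<in> {NE (ns ! i), SE (ns ! i)}"
    and ne: "T \<noteq> {}" by blast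
  have c: "i < length ns \<Longrightarrow> col (ns!i) = col (ns!0) + int i" for i
  proof (induction i)
    case 0 thus ?case by simp
  next
    case (Suc i)
    then have "i + 1 < length ns" by simp
    then have "ns!(i+1) \<in> {NE (ns ! i), SE (ns ! i)}" using ns(2) by blast
    then have "ns!(Suc i) \<in> {NE (ns ! i), SE (ns ! i)}" by simp
    then have "col (ns!Suc i) = col (ns!i) + 1" by auto
    with Suc show ?case by simp
  qed
  show ?thesis
  proof (rule that[of ns])
    show "set ns = T" by (rule ns(1))
    show "ns \<noteq> []" using ns(1) ne by auto
    show "\<And>i. i < length ns \<Longrightarrow> col (ns!i) = col (ns!0) + int i" by (rule c)
    show "\<And>i. i+1 < length ns \<Longrightarrow> ns!(i+1) = NE (ns!i) \<or> ns!(i+1) = SE (ns!i)"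
      using ns(2) by blast
  qed
qed

lemma set_nth_obtain: assumes "x \<in> set ns" obtains i where "i < length ns" "x = ns!i"
  using assms by (metis in_set_conv_nth)

lemma tile_col_inj: assumes "is_tile T" "x \<in> T" "y \<in> T" "col x = col y" shows "x = y"
proof -
  obtain ns where ns: "set ns = T" "ns \<noteq> []" "\<And>i. i < length ns \<Longrightarrow> col (ns!i) = col (ns!0) + int i"
    using tile_list[OF assms(1)] by blast
  obtain i where i: "i < length ns" "x = ns!i" using set_nth_obtain[of _ ns] assms(2) ns(1) by metis
  obtain k where k: "k < length ns" "y = ns!k" using set_nth_obtain[of _ ns] assms(3) ns(1) by metis
  have "int i = int k" using ns(3)[OF i(1)] ns(3)[OF k(1)] assms(4) i(2) k(2) by simp
  then show ?thesis using i k by simp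
qed

lemma tile_start_prop: assumes "is_tile T"
  shows "tile_start T \<in> T" "\<And>m. m \<in> T \<Longrightarrow> col (tile_start T) \<le> col m"
proof -
  obtain ns where ns: "set ns = T" "ns \<noteq> []" "\<And>i. i < length ns \<Longrightarrow> col (ns!i) = col (ns!0) + int i"
    using tile_list[OF assms(1)] by blast
  have P1: "ns!0 \<in> T" using ns(1,2) nth_mem[of 0 ns] by simp
  have P2: "col (ns!0) \<le> col m" if mT: "m \<in> T" for m
  proof -
    obtain i where i: "i < length ns" "m = ns!i" using set_nth_obtain[of _ ns] mT ns(1) by metis
    show ?thesis using ns(3)[OF i(1)] i(2) by simp
  qed
  have "tile_start T = ns!0" unfolding tile_start_def
  proof (rule the_equality)
    show "ns!0 \<in> T \<and> (\<forall>m\<in>T. col (ns!0) \<le> col m)" using P1 P2 by blast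
  next
    fix n assume n: "n \<in> T \<and> (\<forall>m\<in>T. col n \<le> col m)"
    then have "col n = col (ns!0)" using P1 P2 by (simp add: order_antisym)
    then show "n = ns!0" using tile_col_inj[OF assms] n P1 by blast
  qed
  with P1 P2 show "tile_start T \<in> T" "\<And>m. m \<in> T \<Longrightarrow> col (tile_start T) \<le> col m" by auto
qed

lemma tile_end_prop: assumes "is_tile T"
  shows "tile_end T \<in> T" "\<And>m. m \<in> T \<Longrightarrow> col m \<le> col (tile_end T)"
proof -
  obtain ns where ns: "set ns = T" "ns \<noteq> []" "\<And>i. i < length ns \<Longrightarrow> col (ns!i) = col (ns!0) + int i"
    using tile_list[OF assms(1)] by blast
  define l where "l = ns!(length ns - 1)"
  have P1: "l \<in> T" using ns(1,2) nth_mem[of "length ns - 1" ns] unfolding l_def by simp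
  have P2: "col m \<le> col l" if mT: "m \<in> T" for m
  proof -
    obtain i where i: "i < length ns" "m = ns!i" using set_nth_obtain[of _ ns] mT ns(1) by metis
    have "length ns - 1 < length ns" using ns(2) by simp
    from ns(3)[OF this] ns(3)[OF i(1)] i show ?thesis unfolding l_def by simp
  qed
  have "tile_end T = l" unfolding tile_end_def
  proof (rule the_equality)
    show "l \<in> T \<and> (\<forall>m\<in>T. col m \<le> col l)" using P1 P2 by blast
  next
    fix n assume n: "n \<in> T \<and> (\<forall>m\<in>T. col m \<le> col n)"
    then have "col n = col l" using P1 P2 by (simp add: order_antisym)
    then show "n = l" using tile_col_inj[OF assms] n P1 by blast
  qed
  with P1 P2 show "tile_end T \<in> T" "\<And>m. m \<in> T \<Longrightarrow> col m \<le> col (tile_end T)" by auto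
qed

lemma tile_pred: assumes "is_tile T" "x \<in> T" "col (tile_start T) < col x"
  shows "\<exists>y\<in>T. x = NE y \<or> x = SE y"
proof -
  obtain ns where ns: "set ns = T" "ns \<noteq> []" "\<And>i. i < length ns \<Longrightarrow> col (ns!i) = col (ns!0) + int i"
    "\<And>i. i+1 < length ns \<Longrightarrow> ns!(i+1) = NE (ns!i) \<or> ns!(i+1) = SE (ns!i)"
    using tile_list[OF assms(1)] by blast
  obtain i where i: "i < length ns" "x = ns!i" using set_nth_obtain[of _ ns] assms(2) ns(1) by metis
  obtain k where k: "k < length ns" "tile_start T = ns!k"
    using set_nth_obtain[of _ ns] tile_start_prop(1)[OF assms(1)] ns(1) by metis
  have "col (ns!0) \<le> col (tile_start T)" using ns(3)[OF k(1)] k(2) by simp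
  then have "i \<noteq> 0" using assms(3) i by (metis leD nth_Cons_0)
  then have i1: "(i-1)+1 < length ns" "(i-1)+1 = i" using i by auto
  have "ns!(i-1) \<in> T" using ns(1) i by auto
  then show ?thesis using ns(4)[OF i1(1)] i1(2) i(2) by metis
qed

lemma tile_succ: assumes "is_tile T" "x \<in> T" "col x < col (tile_end T)"
  shows "\<exists>y\<in>T. y = NE x \<or> y = SE x"
proof -
  obtain ns where ns: "set ns = T" "ns \<noteq> []" "\<And>i. i < length ns \<Longrightarrow> col (ns!i) = col (ns!0) + int i"
    "\<And>i. i+1 < length ns \<Longrightarrow> ns!(i+1) = NE (ns!i) \<or> ns!(i+1) = SE (ns!i)"
    using tile_list[OF assms(1)] by blast
  obtain i where i: "i < length ns" "x = ns!i" using set_nth_obtain[of _ ns] assms(2) ns(1) by metis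
  obtain k where k: "k < length ns" "tile_end T = ns!k" using set_nth_obtain[of _ ns] tile_end_prop(1)[OF assms(1)] ns(1) by metis
  have "int i < int k" using assms(3) i k ns(3)[OF i(1)] ns(3)[OF k(1)] by simp
  then have "i+1 < length ns" using k by simp
  moreover have "ns!(i+1) \<in> T" using calculation ns(1) by auto
  ultimately show ?thesis using ns(4)[of i] i(2) by metis
qed

locale ctx =
  fixes L M :: "node set" and P :: "node set set" and a b :: int
  assumes yL: "young_diagram L" and yM: "young_diagram M" and sub: "M \<subseteq> L"
    and addM: "addable M (a,b)" and til: "dyck_tiling L M P" and ce: "cover_expansive L M P"
begin

lemma downL: "(x,y) \<in> L \<Longrightarrow> 1 \<le> x' \<Longrightarrow> x' \<le> x \<Longrightarrow> 1 \<le> y' \<Longrightarrow> y' \<le> y \<Longrightarrow> (x',y') \<in> L"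
  using yL unfolding young_diagram_def by blast

lemma ab: "1 \<le> a" "1 \<le> b" using addM by (auto simp: addable_def is_node_def)

lemma notM: "a \<le> x \<Longrightarrow> b \<le> y \<Longrightarrow> (x,y) \<notin> M"
  using yM addM ab unfolding young_diagram_def addable_def by blast

lemma insM: "(x,y) \<in> insert (a,b) M \<Longrightarrow> 1 \<le> x' \<Longrightarrow> x' \<le> x \<Longrightarrow> 1 \<le> y' \<Longrightarrow> y' \<le> y \<Longrightarrow> (x',y') \<in> insert (a,b) M"
  using addM unfolding addable_def young_diagram_def by blast

lemma nodeL: "(x,y) \<in> L \<Longrightarrow> 1 \<le> x \<and> 1 \<le> y"
  using yL unfolding young_diagram_def is_node_def by auto

lemma SWn: "(a, b-1) \<notin> L - M"
proof
  assume "(a, b-1) \<in> L - M"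
  then have "1 \<le> b - 1" using nodeL[of a "b-1"] by auto
  then have "(a,b-1) \<in> insert (a,b) M" using insM[of a b a "b-1"] ab by auto
  then show False using \<open>(a, b-1) \<in> L - M\<close> by auto
qed

lemma SEn: "(a-1, b) \<notin> L - M"
proof
  assume "(a-1, b) \<in> L - M"
  then have "1 \<le> a - 1" using nodeL[of "a-1" b] by auto
  then have "(a-1,b) \<in> insert (a,b) M" using insM[of a b "a-1" b] ab by auto
  then show False using \<open>(a-1, b) \<in> L - M\<close> by auto
qed

lemma tP: "T \<in> P \<Longrightarrow> dyck_tile T" "T \<in> P \<Longrightarrow> T \<subseteq> L - M"
  using til unfolding dyck_tiling_def by auto

lemma tof: assumes "y \<in> L - M" shows "tile_of P y \<in> P \<and> y \<in> tile_of P y"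
proof -
  obtain T where T: "T \<in> P" "y \<in> T" using til assms unfolding dyck_tiling_def by blast
  have "tile_of P y = T" unfolding tile_of_def
    apply (rule the_equality) using T apply blast
    using til T unfolding dyck_tiling_def by blast
  with T show ?thesis by simp
qed

lemma tof_tile: "y \<in> L - M \<Longrightarrow> is_tile (tile_of P y)"
  using tof tP unfolding dyck_tile_def by blast

lemma tof_sub: "y \<in> L - M \<Longrightarrow> z \<in> tile_of P y \<Longrightarrow> z \<in> L - M"
  using tof tP by blast

lemma same_tile: assumes "x \<in> L-M" "y \<in> L-M" "z \<in> tile_of P x" "z \<in> tile_of P y" "col x = col y"
  shows "x = y"
proof -
  have "tile_of P x = tile_of P y" using tof[OF assms(1)] tof[OF assms(2)] assms(3,4) til
    unfolding dyck_tiling_def by blast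
  then show ?thesis using tile_col_inj[OF tof_tile[OF assms(2)]] tof assms by metis
qed

lemma hmax_start: assumes "y \<in> L - M" "z \<in> tile_of P y"
  shows "height z \<le> height (tile_start (tile_of P y))"
proof -
  have d: "dyck_tile (tile_of P y)" using tof tP assms by blast
  then have "finite (tile_of P y)" unfolding dyck_tile_def is_tile_def by blast
  then have "height z \<le> Max (height ` tile_of P y)" using assms(2) by auto
  with d show ?thesis unfolding dyck_tile_def by simp
qed

lemma hmax_end: assumes "y \<in> L - M" "z \<in> tile_of P y"
  shows "height z \<le> height (tile_end (tile_of P y))"
proof -
  have d: "dyck_tile (tile_of P y)" using tof tP assms by blast
  then have "finite (tile_of P y)" unfolding dyck_tile_def is_tile_def by blast
  then have "height z \<le> Max (height ` tile_of P y)" using assms(2) by auto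
  with d show ?thesis unfolding dyck_tile_def by simp
qed

lemma ceSE: "x \<in> L-M \<Longrightarrow> SE x \<in> L-M \<Longrightarrow> col (tile_start (tile_of P (SE x))) \<le> col (tile_start (tile_of P x))"
  using ce unfolding cover_expansive_def by blast

lemma ceSW: "x \<in> L-M \<Longrightarrow> SW x \<in> L-M \<Longrightarrow> col (tile_end (tile_of P (SW x))) \<ge> col (tile_end (tile_of P x))"
  using ce unfolding cover_expansive_def by blast


abbreviation "dd s \<equiv> (a + int s, b + int s)"
abbreviation "ee s \<equiv> (a + int s + 1, b + int s)"
abbreviation "ff s \<equiv> (a + int s, b + int s + 1)"

lemma dd_neq: "dd s = dd s' \<Longrightarrow> s = s'" by simp

lemma same_dd: assumes "dd s \<in> L - M" "dd s' \<in> L - M" "z \<in> tile_of P (dd s)" "z \<in> tile_of P (dd s')"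
  shows "s = s'"
proof -
  have "dd s = dd s'" using same_tile[OF assms] by (simp add: col_def)
  then show ?thesis by simp
qed

lemma caseB: assumes dt: "dd t \<in> L" and et: "ee t \<in> L" and ft: "ff t \<notin> L" shows False
proof -
  have dLM: "dd s \<in> L - M" if "s \<le> t" for s
    using downL[of "a+int t" "b+int t" "a+int s" "b+int s"] dt that ab notM[of "a+int s" "b+int s"] by auto
  have eLM: "ee s \<in> L - M" if "s \<le> t" for s
    using downL[of "a+int t+1" "b+int t" "a+int s+1" "b+int s"] et that ab notM[of "a+int s+1" "b+int s"] by auto
  have fLM: "ff s \<in> L - M" if "s < t" for s
    using downL[of "a+int t" "b+int t" "a+int s" "b+int s+1"] dt that ab notM[of "a+int s" "b+int s+1"] by auto
  have st: "col (tile_start (tile_of P (dd s))) < col (dd s)" if "s \<le> t" for s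
  proof -
    have "SE (ee s) = dd s" by (simp add: SE_def)
    then have "col (tile_start (tile_of P (dd s))) \<le> col (tile_start (tile_of P (ee s)))"
      using ceSE[of "ee s"] eLM[OF that] dLM[OF that] by simp
    also have "\<dots> \<le> col (ee s)"
      using tile_start_prop(2)[OF tof_tile[OF eLM[OF that]]] tof[OF eLM[OF that]] by blast
    finally show ?thesis by (simp add: col_def)
  qed
  have ein: "ee s \<in> tile_of P (dd s)" if "s \<le> t" for s
    using that
  proof (induction s)
    case 0
    have d: "dd 0 \<in> L - M" using dLM[of 0] by simp
    obtain y where y: "y \<in> tile_of P (dd 0)" "dd 0 = NE y \<or> dd 0 = SE y"
      using tile_pred[OF tof_tile[OF d] conjunct2[OF tof[OF d]] st[of 0]] by auto
    have yLM: "y \<in> L - M" using tof_sub[OF d y(1)] .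
    show ?case
    proof (cases "dd 0 = NE y")
      case True then have "y = (a, b-1)" by (cases y) (simp add: NE_def)
      then show ?thesis using SWn yLM by simp
    next
      case False then have "dd 0 = SE y" using y by auto
      then have "y = ee 0" by (cases y) (simp add: SE_def)
      then show ?thesis using y by simp
    qed
  next
    case (Suc s)
    have d: "dd (Suc s) \<in> L - M" using Suc.prems by (intro dLM) simp
    have ds: "dd s \<in> L - M" using Suc.prems by (intro dLM) simp
    obtain y where y: "y \<in> tile_of P (dd (Suc s))" "dd (Suc s) = NE y \<or> dd (Suc s) = SE y"
      using tile_pred[OF tof_tile[OF d] conjunct2[OF tof[OF d]] st[OF Suc.prems]] by auto
    show ?case
    proof (cases "dd (Suc s) = NE y")
      case True then have "y = ee s" by (cases y) (simp add: NE_def)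
      then have "y \<in> tile_of P (dd s)" using Suc.IH Suc.prems by simp
      then have "s = Suc s" using same_dd[OF ds d _ y(1)] by blast
      then show ?thesis by simp
    next
      case False then have "dd (Suc s) = SE y" using y by auto
      then have "y = ee (Suc s)" by (cases y) (simp add: SE_def)
      then show ?thesis using y by simp
    qed
  qed
  have en: "col (dd s) < col (tile_end (tile_of P (dd s)))" if "s < t" for s
  proof -
    have sw: "SW (ff s) = dd s" by (simp add: SW_def)
    have "col (ff s) \<le> col (tile_end (tile_of P (ff s)))"
      using tile_end_prop(2)[OF tof_tile[OF fLM[OF that]]] tof[OF fLM[OF that]] by blast
    also have "\<dots> \<le> col (tile_end (tile_of P (dd s)))"
      using ceSW[of "ff s"] fLM[OF that] dLM[of s] that sw by simp
    finally show ?thesis by (simp add: col_def)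
  qed
  have fin: "ff s \<in> tile_of P (dd s)" if "s < t" for s
    using that
  proof (induction s)
    case 0
    have d: "dd 0 \<in> L - M" using dLM[of 0] by simp
    obtain y where y: "y \<in> tile_of P (dd 0)" "y = NE (dd 0) \<or> y = SE (dd 0)"
      using tile_succ[OF tof_tile[OF d] conjunct2[OF tof[OF d]] en[OF 0]] by auto
    have yLM: "y \<in> L - M" using tof_sub[OF d y(1)] .
    show ?case
    proof (cases "y = SE (dd 0)")
      case True then have "y = (a - 1, b)" by (simp add: SE_def)
      then show ?thesis using SEn yLM by simp
    next
      case False then have "y = NE (dd 0)" using y by auto
      then have "y = ff 0" by (simp add: NE_def)
      then show ?thesis using y by simp
    qed
  next
    case (Suc s)
    have d: "dd (Suc s) \<in> L - M" using Suc.prems by (intro dLM) simp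
    have ds: "dd s \<in> L - M" using Suc.prems by (intro dLM) simp
    obtain y where y: "y \<in> tile_of P (dd (Suc s))" "y = NE (dd (Suc s)) \<or> y = SE (dd (Suc s))"
      using tile_succ[OF tof_tile[OF d] conjunct2[OF tof[OF d]] en[OF Suc.prems]] by auto
    show ?case
    proof (cases "y = SE (dd (Suc s))")
      case True then have "y = ff s" by (simp add: SE_def)
      then have "y \<in> tile_of P (dd s)" using Suc.IH Suc.prems by simp
      then have "s = Suc s" using same_dd[OF ds d _ y(1)] by blast
      then show ?thesis by simp
    next
      case False then have "y = NE (dd (Suc s))" using y by auto
      then have "y = ff (Suc s)" by (simp add: NE_def)
      then show ?thesis using y by simp
    qed
  qed
  have d: "dd t \<in> L - M" using dLM[of t] by simp
  have e: "ee t \<in> tile_of P (dd t)" using ein by simp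
  have h: "height (ee t) \<le> height (tile_end (tile_of P (dd t)))" using hmax_end[OF d e] .
  show False
  proof (cases "col (dd t) < col (tile_end (tile_of P (dd t)))")
    case True
    obtain y where y: "y \<in> tile_of P (dd t)" "y = NE (dd t) \<or> y = SE (dd t)"
      using tile_succ[OF tof_tile[OF d] conjunct2[OF tof[OF d]] True] by auto
    have yLM: "y \<in> L - M" using tof_sub[OF d y(1)] .
    show False
    proof (cases "y = NE (dd t)")
      case True then have "y = ff t" by (simp add: NE_def)
      then show False using ft yLM by simp
    next
      case False then have ySE: "y = SE (dd t)" using y by auto
      show False
      proof (cases t)
        case 0 then have "y = (a-1, b)" using ySE by (simp add: SE_def)
        then show False using SEn yLM by simp
      next
        case (Suc t')
        then have "y = ff t'" using ySE by (simp add: SE_def)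
        then have "y \<in> tile_of P (dd t')" using fin[of t'] Suc by simp
        moreover have "dd t' \<in> L - M" using dLM Suc by simp
        ultimately have "t' = t" using same_dd[OF _ d _ y(1)] by blast
        then show False using Suc by simp
      qed
    qed
  next
    case False
    have "tile_end (tile_of P (dd t)) = dd t"
      using tile_col_inj[OF tof_tile[OF d] tile_end_prop(1)[OF tof_tile[OF d]] conjunct2[OF tof[OF d]]]
        tile_end_prop(2)[OF tof_tile[OF d] conjunct2[OF tof[OF d]]] False by simp
    then show False using h by (simp add: height_def)
  qed
qed

lemma caseA: assumes dt: "dd t \<in> L" and ft: "ff t \<in> L" and et: "ee t \<notin> L" shows False
proof -
  have dLM: "dd s \<in> L - M" if "s \<le> t" for s
    using downL[of "a+int t" "b+int t" "a+int s" "b+int s"] dt that ab notM[of "a+int s" "b+int s"] by auto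
  have fLM: "ff s \<in> L - M" if "s \<le> t" for s
    using downL[of "a+int t" "b+int t+1" "a+int s" "b+int s+1"] ft that ab notM[of "a+int s" "b+int s+1"] by auto
  have eLM: "ee s \<in> L - M" if "s < t" for s
    using downL[of "a+int t" "b+int t" "a+int s+1" "b+int s"] dt that ab notM[of "a+int s+1" "b+int s"] by auto
  have en: "col (dd s) < col (tile_end (tile_of P (dd s)))" if "s \<le> t" for s
  proof -
    have sw: "SW (ff s) = dd s" by (simp add: SW_def)
    have "col (ff s) \<le> col (tile_end (tile_of P (ff s)))"
      using tile_end_prop(2)[OF tof_tile[OF fLM[OF that]]] tof[OF fLM[OF that]] by blast
    also have "\<dots> \<le> col (tile_end (tile_of P (dd s)))"
      using ceSW[of "ff s"] fLM[OF that] dLM[of s] that sw by simp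
    finally show ?thesis by (simp add: col_def)
  qed
  have fin: "ff s \<in> tile_of P (dd s)" if "s \<le> t" for s
    using that
  proof (induction s)
    case 0
    have d: "dd 0 \<in> L - M" using dLM[of 0] by simp
    obtain y where y: "y \<in> tile_of P (dd 0)" "y = NE (dd 0) \<or> y = SE (dd 0)"
      using tile_succ[OF tof_tile[OF d] conjunct2[OF tof[OF d]] en[OF 0]] by auto
    have yLM: "y \<in> L - M" using tof_sub[OF d y(1)] .
    show ?case
    proof (cases "y = SE (dd 0)")
      case True then have "y = (a - 1, b)" by (simp add: SE_def)
      then show ?thesis using SEn yLM by simp
    next
      case False then have "y = NE (dd 0)" using y by auto
      then have "y = ff 0" by (simp add: NE_def)
      then show ?thesis using y by simp
    qed
  next
    case (Suc s)
    have d: "dd (Suc s) \<in> L - M" using Suc.prems by (intro dLM) simp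
    have ds: "dd s \<in> L - M" using Suc.prems by (intro dLM) simp
    obtain y where y: "y \<in> tile_of P (dd (Suc s))" "y = NE (dd (Suc s)) \<or> y = SE (dd (Suc s))"
      using tile_succ[OF tof_tile[OF d] conjunct2[OF tof[OF d]] en[OF Suc.prems]] by auto
    show ?case
    proof (cases "y = SE (dd (Suc s))")
      case True then have "y = ff s" by (simp add: SE_def)
      then have "y \<in> tile_of P (dd s)" using Suc.IH Suc.prems by simp
      then have "s = Suc s" using same_dd[OF ds d _ y(1)] by blast
      then show ?thesis by simp
    next
      case False then have "y = NE (dd (Suc s))" using y by auto
      then have "y = ff (Suc s)" by (simp add: NE_def)
      then show ?thesis using y by simp
    qed
  qed
  have st: "col (tile_start (tile_of P (dd s))) < col (dd s)" if "s < t" for s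
  proof -
    have "SE (ee s) = dd s" by (simp add: SE_def)
    then have "col (tile_start (tile_of P (dd s))) \<le> col (tile_start (tile_of P (ee s)))"
      using ceSE[of "ee s"] eLM[OF that] dLM[of s] that by simp
    also have "\<dots> \<le> col (ee s)"
      using tile_start_prop(2)[OF tof_tile[OF eLM[OF that]]] tof[OF eLM[OF that]] by blast
    finally show ?thesis by (simp add: col_def)
  qed
  have ein: "ee s \<in> tile_of P (dd s)" if "s < t" for s
    using that
  proof (induction s)
    case 0
    have d: "dd 0 \<in> L - M" using dLM[of 0] by simp
    obtain y where y: "y \<in> tile_of P (dd 0)" "dd 0 = NE y \<or> dd 0 = SE y"
      using tile_pred[OF tof_tile[OF d] conjunct2[OF tof[OF d]] st[OF 0]] by auto
    have yLM: "y \<in> L - M" using tof_sub[OF d y(1)] .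
    show ?case
    proof (cases "dd 0 = NE y")
      case True then have "y = (a, b-1)" by (cases y) (simp add: NE_def)
      then show ?thesis using SWn yLM by simp
    next
      case False then have "dd 0 = SE y" using y by auto
      then have "y = ee 0" by (cases y) (simp add: SE_def)
      then show ?thesis using y by simp
    qed
  next
    case (Suc s)
    have d: "dd (Suc s) \<in> L - M" using Suc.prems by (intro dLM) simp
    have ds: "dd s \<in> L - M" using Suc.prems by (intro dLM) simp
    obtain y where y: "y \<in> tile_of P (dd (Suc s))" "dd (Suc s) = NE y \<or> dd (Suc s) = SE y"
      using tile_pred[OF tof_tile[OF d] conjunct2[OF tof[OF d]] st[OF Suc.prems]] by auto
    show ?case
    proof (cases "dd (Suc s) = NE y")
      case True then have "y = ee s" by (cases y) (simp add: NE_def)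
      then have "y \<in> tile_of P (dd s)" using Suc.IH Suc.prems by simp
      then have "s = Suc s" using same_dd[OF ds d _ y(1)] by blast
      then show ?thesis by simp
    next
      case False then have "dd (Suc s) = SE y" using y by auto
      then have "y = ee (Suc s)" by (cases y) (simp add: SE_def)
      then show ?thesis using y by simp
    qed
  qed
  have d: "dd t \<in> L - M" using dLM[of t] by simp
  have f: "ff t \<in> tile_of P (dd t)" using fin by simp
  have h: "height (ff t) \<le> height (tile_start (tile_of P (dd t)))" using hmax_start[OF d f] .
  show False
  proof (cases "col (tile_start (tile_of P (dd t))) < col (dd t)")
    case True
    obtain y where y: "y \<in> tile_of P (dd t)" "dd t = NE y \<or> dd t = SE y"
      using tile_pred[OF tof_tile[OF d] conjunct2[OF tof[OF d]] True] by auto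
    have yLM: "y \<in> L - M" using tof_sub[OF d y(1)] .
    show False
    proof (cases "dd t = SE y")
      case True then have "y = ee t" by (cases y) (simp add: SE_def)
      then show False using et yLM by simp
    next
      case False then have yNE: "dd t = NE y" using y by auto
      show False
      proof (cases t)
        case 0 then have "y = (a, b-1)" using yNE by (cases y) (simp add: NE_def)
        then show False using SWn yLM by simp
      next
        case (Suc t')
        then have "y = ee t'" using yNE by (cases y) (simp add: NE_def)
        then have "y \<in> tile_of P (dd t')" using ein[of t'] Suc by simp
        moreover have "dd t' \<in> L - M" using dLM Suc by simp
        ultimately have "t' = t" using same_dd[OF _ d _ y(1)] by blast
        then show False using Suc by simp
      qed
    qed
  next
    case False
    have "tile_start (tile_of P (dd t)) = dd t"
      using tile_col_inj[OF tof_tile[OF d] tile_start_prop(1)[OF tof_tile[OF d]] conjunct2[OF tof[OF d]]]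
        tile_start_prop(2)[OF tof_tile[OF d] conjunct2[OF tof[OF d]]] False by simp
    then show False using h by (simp add: height_def)
  qed
qed

lemma main: "\<exists>n. (addable L n \<or> removable L n) \<and> col n = b - a"
proof (cases "(a,b) \<in> L")
  case False
  have fL: "finite L" and nL: "\<forall>n\<in>L. is_node n" using yL unfolding young_diagram_def by auto
  have nab: "is_node (a,b)" using addM unfolding addable_def by simp
  have "young_diagram (insert (a,b) L)"
    unfolding young_diagram_def
  proof (intro conjI allI impI)
    show "finite (insert (a, b) L)" using fL by simp
    show "\<forall>n\<in>insert (a, b) L. is_node n" using nL nab by simp
    fix x y x' y' assume H: "(x, y) \<in> insert (a, b) L \<and> 1 \<le> x' \<and> x' \<le> x \<and> 1 \<le> y' \<and> y' \<le> y"
    show "(x', y') \<in> insert (a, b) L"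
    proof (cases "(x,y) = (a,b)")
      case True
      then have "(x', y') \<in> insert (a,b) M" using insM[of x y x' y'] H by simp
      then show ?thesis using sub by auto
    next
      case False then show ?thesis using downL[of x y x' y'] H by auto
    qed
  qed
  then have "addable L (a,b)" using False nab unfolding addable_def by simp
  then show ?thesis by (auto simp: col_def)
next
  case True
  define S where "S = {s::nat. dd s \<in> L}"
  have fL: "finite L" and nL: "\<forall>n\<in>L. is_node n" using yL unfolding young_diagram_def by auto
  have inj: "inj (\<lambda>s::nat. dd s)" by (auto simp: inj_on_def)
  have "S = (\<lambda>s::nat. dd s) -` L" unfolding S_def by auto
  then have fS: "finite S" using finite_vimageI[OF fL inj] by simp
  have "0 \<in> S" using True unfolding S_def by simp
  define t where "t = Max S"
  have "t \<in> S" using fS \<open>0 \<in> S\<close> unfolding t_def using Max_in[OF fS] by blast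
  then have dt: "dd t \<in> L" unfolding S_def by simp
  have "Suc t \<notin> S" using fS unfolding t_def by (meson Max_ge not_less_eq_eq order_refl)
  then have dt1: "dd (Suc t) \<notin> L" unfolding S_def by simp
  show ?thesis
  proof (cases "ee t \<in> L")
    case eT: True
    show ?thesis
    proof (cases "ff t \<in> L")
      case fT: True
      have nd: "is_node (dd (Suc t))" using ab by (simp add: is_node_def)
      have "young_diagram (insert (dd (Suc t)) L)"
        unfolding young_diagram_def
      proof (intro conjI allI impI)
        show "finite (insert (dd (Suc t)) L)" using fL by simp
        show "\<forall>n\<in>insert (dd (Suc t)) L. is_node n" using nL nd by simp
        fix x y x' y' assume H: "(x, y) \<in> insert (dd (Suc t)) L \<and> 1 \<le> x' \<and> x' \<le> x \<and> 1 \<le> y' \<and> y' \<le> y"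
        show "(x', y') \<in> insert (dd (Suc t)) L"
        proof (cases "(x,y) = dd (Suc t)")
          case True
          show ?thesis
          proof (cases "x' \<le> a + int t")
            case True2: True
            then show ?thesis using downL[of "a + int t" "b + int t + 1" x' y'] fT H True by auto
          next
            case False2: False
            show ?thesis
            proof (cases "y' \<le> b + int t")
              case True
              then show ?thesis using downL[of "a + int t + 1" "b + int t" x' y'] eT H \<open>(x,y) = dd (Suc t)\<close> by auto
            next
              case False
              then show ?thesis using False2 H \<open>(x,y) = dd (Suc t)\<close> by auto
            qed
          qed
        next
          case False then show ?thesis using downL[of x y x' y'] H by auto
        qed
      qed
      then have "addable L (dd (Suc t))" using dt1 nd unfolding addable_def by simp
      then show ?thesis by (intro exI[of _ "dd (Suc t)"]) (simp add: col_def)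
    next
      case False
      then show ?thesis using caseB[OF dt eT] by simp
    qed
  next
    case eF: False
    show ?thesis
    proof (cases "ff t \<in> L")
      case True
      then show ?thesis using caseA[OF dt _ eF] by simp
    next
      case fF: False
      have "young_diagram (L - {dd t})"
        unfolding young_diagram_def
      proof (intro conjI allI impI)
        show "finite (L - {dd t})" using fL by simp
        show "\<forall>n\<in>L - {dd t}. is_node n" using nL by simp
        fix x y x' y' assume H: "(x, y) \<in> L - {dd t} \<and> 1 \<le> x' \<and> x' \<le> x \<and> 1 \<le> y' \<and> y' \<le> y"
        have inL: "(x', y') \<in> L" using downL[of x y x' y'] H by auto
        show "(x', y') \<in> L - {dd t}"
        proof (rule ccontr)
          assume "(x', y') \<notin> L - {dd t}"
          then have eq: "(x', y') = dd t" using inL by simp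
          have "(x,y) \<noteq> dd t" using H by auto
          then have "a + int t + 1 \<le> x \<or> b + int t + 1 \<le> y" using eq H by auto
          then show False
          proof
            assume "a + int t + 1 \<le> x"
            then have "ee t \<in> L" using downL[of x y "a + int t + 1" "b + int t"] H eq ab by auto
            then show False using eF by simp
          next
            assume "b + int t + 1 \<le> y"
            then have "ff t \<in> L" using downL[of x y "a + int t" "b + int t + 1"] H eq ab by auto
            then show False using fF by simp
          qed
        qed
      qed
      then have "removable L (dd t)" using dt unfolding removable_def by simp
      then show ?thesis by (intro exI[of _ "dd t"]) (simp add: col_def)
    qed
  qed
qed

end

theorem lemma4p5:
  fixes L M :: "node set" and j :: int
  assumes "young_diagram L" and "young_diagram M" and "M \<subseteq> L"
    and "\<exists>n. addable M n \<and> col n = j"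
    and "\<exists>P. dyck_tiling L M P \<and> cover_expansive L M P"
  shows "\<exists>n. (addable L n \<or> removable L n) \<and> col n = j"
proof -
  obtain n where n: "addable M n" "col n = j" using assms(4) by blast
  obtain P where P: "dyck_tiling L M P" "cover_expansive L M P" using assms(5) by blast
  obtain a b where nab0: "n = (a,b)" by (cases n)
  interpret ctx L M P a b using assms(1,2,3) P n nab0 by unfold_locales auto
  have "col n = b - a" using nab0 by (simp add: col_def)
  then show ?thesis using main n(2) by simp
qed

end
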